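(* Let $\Gamma$ be a subset of $M^{\mathbb{R}}_{n\times n}(\mathbb{C})$ such that for any $A,B\in\Gamma$ there exists a function $p:[0,1]\rightarrow M^{\mathbb{R}}_{n\times n}(\mathbb{C})$ whose entries are analytic functions on $[0,1]$ with $p(0)=A$, $p(1)=B$ and $p([0,1])\subset\Gamma$. Let $\Gamma_d$ be the set of matrices in $\Gamma$ whose eigenvalues are distinct. If $\Gamma$ contains at least one matrix with distinct eigenvalues, then $\Gamma_d$ is dense in $\Gamma$.
   Context: $M^{\mathbb{R}}_{n\times n}(\mathbb{C})$ denotes the set of $n\times n$ complex matrices all of whose eigenvalues are real, with the topology induced by the Frobenius norm. A complex-valued function is analytic on $[0,1]$ if it is the restriction of a function defined on an open interval containing $[0,1]$ which around each point is given by a convergent power series. Distinct eigenvalues means $n$ pairwise different eigenvalues. *)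

theory Defs
  imports "HOL-Analysis.Analysis"
begin

definition is_eigenvalue :: "complex^'n^'n \<Rightarrow> complex \<Rightarrow> bool" where
  "is_eigenvalue A \<mu> \<longleftrightarrow> det (A - mat \<mu>) = 0"

definition eigenvalues :: "complex^'n^'n \<Rightarrow> complex set" where
  "eigenvalues A = {\<mu>. is_eigenvalue A \<mu>}"

definition real_spectrum_matrices :: "(complex^'n^'n) set" where
  "real_spectrum_matrices = {A. \<forall>\<mu>\<in>eigenvalues A. Im \<mu> = 0}"

definition distinct_eigenvalues :: "complex^'n^'n \<Rightarrow> bool" where
  "distinct_eigenvalues A \<longleftrightarrow> card (eigenvalues A) = CARD('n)"

definition real_analytic_on :: "(real \<Rightarrow> complex) \<Rightarrow> real set \<Rightarrow> bool" where
  "real_analytic_on g U \<longleftrightarrow>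
     (\<forall>x0\<in>U. \<exists>r>0. \<exists>c::nat \<Rightarrow> complex.
        \<forall>x. \<bar>x - x0\<bar> < r \<longrightarrow> (\<lambda>k. c k * of_real ((x - x0) ^ k)) sums g x)"

definition analytic_on_01 :: "(real \<Rightarrow> complex) \<Rightarrow> bool" where
  "analytic_on_01 f \<longleftrightarrow>
     (\<exists>a b g. a < 0 \<and> 1 < b \<and> real_analytic_on g {a<..<b} \<and> (\<forall>t\<in>{0..1}. f t = g t))"

end

theory Submission
  imports Defs "HOL-Complex_Analysis.Complex_Analysis" "Subresultants.Subresultant_Gcd"
    "HOL-Computational_Algebra.Field_as_Ring" "HOL-Computational_Algebra.Fundamental_Theorem_Algebra"
begin

no_notation Matrix.vec_index (infixl "$" 100)
no_notation fps_nth (infixl "$" 75)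


lemma real_analytic_local:
  assumes "real_analytic_on g U" "x0 \<in> U"
  shows "\<exists>r>0. \<exists>H. H holomorphic_on ball (complex_of_real x0) r \<and>
           (\<forall>x. \<bar>x - x0\<bar> < r \<longrightarrow> H (of_real x) = g x)"
proof -
  obtain r c where r: "r > 0" and sc: "\<And>x. \<bar>x - x0\<bar> < r \<Longrightarrow> (\<lambda>k. c k * of_real ((x - x0) ^ k)) sums g x"
    using assms unfolding real_analytic_on_def by blast
  define F where "F = Abs_fps c"
  have cr: "fps_conv_radius F \<ge> ereal r"
    unfolding fps_conv_radius_def F_def
  proof (simp, rule conv_radius_geI_ex')
    fix s :: real assume s: "0 < s" "ereal s < ereal r"
    have "(\<lambda>k. c k * of_real (((x0 + s) - x0) ^ k)) sums g (x0 + s)"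
      using s by (intro sc) auto
    then show "summable (\<lambda>n. c n * complex_of_real s ^ n)"
      by (simp add: sums_summable of_real_power)
  qed
  define H where "H = (\<lambda>z. eval_fps F (z - complex_of_real x0))"
  have "H holomorphic_on ball (complex_of_real x0) r"
  proof -
    have "((eval_fps F) \<circ> (\<lambda>z. z - complex_of_real x0)) holomorphic_on ball (complex_of_real x0) r"
    proof (rule holomorphic_on_compose_gen)
      show "(\<lambda>z. z - complex_of_real x0) holomorphic_on ball (complex_of_real x0) r"
        by (intro holomorphic_intros)
      show "eval_fps F holomorphic_on eball 0 (fps_conv_radius F)"
        by (rule holomorphic_on_eval_fps) simp
      show "(\<lambda>z. z - complex_of_real x0) ` ball (complex_of_real x0) r \<subseteq> eball 0 (fps_conv_radius F)"
      proof
        fix w assume "w \<in> (\<lambda>z. z - complex_of_real x0) ` ball (complex_of_real x0) r"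
        then obtain z where z: "z \<in> ball (complex_of_real x0) r" "w = z - complex_of_real x0" by blast
        then have "norm w < r" by (simp add: dist_norm norm_minus_commute)
        then have "ereal (norm w) < ereal r" by simp
        then have "ereal (norm w) < fps_conv_radius F" using cr by (rule less_le_trans)
        then show "w \<in> eball 0 (fps_conv_radius F)" by simp
      qed
    qed
    then show ?thesis by (simp add: H_def o_def)
  qed
  moreover have "\<forall>x. \<bar>x - x0\<bar> < r \<longrightarrow> H (of_real x) = g x"
  proof (intro allI impI)
    fix x assume x: "\<bar>x - x0\<bar> < r"
    have "(\<lambda>k. c k * of_real ((x - x0) ^ k)) sums g x" by (rule sc[OF x])
    then have "(\<lambda>k. c k * (complex_of_real x - complex_of_real x0) ^ k) sums g x"
      by (simp add: of_real_power)
    then show "H (of_real x) = g x"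
      unfolding H_def eval_fps_def F_def by (simp add: sums_iff)
  qed
  ultimately show ?thesis using r by blast
qed

lemma identity_real:
  fixes h :: "real \<Rightarrow> complex"
  assumes loc: "\<And>x0. x0 \<in> {a<..<b} \<Longrightarrow> \<exists>r>0. \<exists>H. H holomorphic_on ball (complex_of_real x0) r \<and>
           (\<forall>x. \<bar>x - x0\<bar> < r \<longrightarrow> H (of_real x) = h x)"
    and cd: "c < d" "{c<..<d} \<subseteq> {a<..<b}" and z: "\<And>x. x \<in> {c<..<d} \<Longrightarrow> h x = 0"
    and y: "y \<in> {a<..<b}"
  shows "h y = 0"
proof -
  define T where "T = {x\<in>{a<..<b}. \<exists>e>0. \<forall>y. \<bar>y - x\<bar> < e \<longrightarrow> h y = 0}"
  have Tsub: "T \<subseteq> {a<..<b}" unfolding T_def by auto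
  have "open T"
    unfolding open_dist
  proof (intro ballI)
    fix x assume "x \<in> T"
    then obtain e where e: "e > 0" "\<forall>y. \<bar>y - x\<bar> < e \<longrightarrow> h y = 0" and x: "a < x" "x < b"
      unfolding T_def by auto
    define e' where "e' = min e (min (x - a) (b - x)) / 2"
    have e': "e' > 0" using e x by (simp add: e'_def)
    have "\<forall>y. dist y x < e' \<longrightarrow> y \<in> T"
    proof (intro allI impI)
      fix y assume "dist y x < e'"
      then have yx: "\<bar>y - x\<bar> < e'" by (simp add: dist_real_def)
      have "e' \<le> (x - a) / 2" "e' \<le> (b - x) / 2" unfolding e'_def by auto
      then have "\<bar>y - x\<bar> < x - a" "\<bar>y - x\<bar> < b - x" using yx x by auto
      then have "y \<in> {a<..<b}" by (auto simp: abs_less_iff)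
      moreover have "\<forall>w. \<bar>w - y\<bar> < e' \<longrightarrow> h w = 0"
      proof (intro allI impI)
        fix w assume w: "\<bar>w - y\<bar> < e'"
        have "e' \<le> e / 2" unfolding e'_def by auto
        then have "\<bar>w - x\<bar> < e" using w yx by (auto simp: abs_less_iff)
        then show "h w = 0" using e by blast
      qed
      ultimately show "y \<in> T" unfolding T_def using e' by blast
    qed
    then show "\<exists>e>0. \<forall>y. dist y x < e \<longrightarrow> y \<in> T" using e' by blast
  qed
  then have op: "openin (top_of_set {a<..<b}) T" using Tsub by (simp add: openin_open_eq)
  have cl: "closedin (top_of_set {a<..<b}) T"
    unfolding closedin_limpt
  proof (intro conjI allI impI Tsub)
    fix x assume "x islimpt T \<and> x \<in> {a<..<b}"
    then have lx: "x islimpt T" and xab: "x \<in> {a<..<b}" by auto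
    obtain r H where r: "r > 0" and Hh: "H holomorphic_on ball (complex_of_real x) r"
      and HE: "\<forall>y. \<bar>y - x\<bar> < r \<longrightarrow> H (of_real y) = h y" using loc[OF xab] by blast
    define U where "U = complex_of_real ` (T \<inter> {y. \<bar>y - x\<bar> < r})"
    have U0: "H u = 0" if "u \<in> U" for u
    proof -
      from that obtain y where y: "y \<in> T" "\<bar>y - x\<bar> < r" "u = of_real y" unfolding U_def by auto
      have "h y = 0" using y(1) unfolding T_def by force
      then show ?thesis using HE y by simp
    qed
    have Usub: "U \<subseteq> ball (complex_of_real x) r"
      unfolding U_def by (auto simp: dist_norm norm_minus_commute simp flip: of_real_diff)
    have limU: "complex_of_real x islimpt U"
      unfolding islimpt_approachable
    proof (intro allI impI)
      fix e :: real assume "e > 0"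
      then obtain y where y: "y \<in> T" "y \<noteq> x" "dist y x < min e r"
        using lx unfolding islimpt_approachable by (metis min_less_iff_conj r)
      then have "of_real y \<in> U" unfolding U_def by (auto simp: dist_real_def)
      moreover have "complex_of_real y \<noteq> of_real x" using y by simp
      moreover have "dist (complex_of_real y) (of_real x) < e" using y by (simp add: dist_norm dist_real_def flip: of_real_diff)
      ultimately show "\<exists>u\<in>U. u \<noteq> complex_of_real x \<and> dist u (complex_of_real x) < e" by blast
    qed
    have "\<forall>y. \<bar>y - x\<bar> < r \<longrightarrow> h y = 0"
    proof (intro allI impI)
      fix y assume yx: "\<bar>y - x\<bar> < r"
      have "H (of_real y) = 0"
        by (rule analytic_continuation[OF Hh open_ball connected_ball Usub _ limU U0])
           (use r yx in \<open>auto simp: dist_norm norm_minus_commute simp flip: of_real_diff\<close>)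
      then show "h y = 0" using HE yx by simp
    qed
    then show "x \<in> T" unfolding T_def using xab r by blast
  qed
  have ne: "(c + d) / 2 \<in> T"
  proof -
    have "\<forall>w. \<bar>w - (c + d) / 2\<bar> < (d - c) / 2 \<longrightarrow> h w = 0"
    proof (intro allI impI)
      fix w assume "\<bar>w - (c + d) / 2\<bar> < (d - c) / 2"
      then have "c < w" "w < d" unfolding abs_less_iff by (auto simp: field_simps)
      then show "h w = 0" using z by auto
    qed
    moreover have m: "(c + d) / 2 \<in> {c<..<d}" using cd by auto
    moreover have "(c + d) / 2 \<in> {a<..<b}" using cd(2) m by blast
    moreover have "(d - c) / 2 > 0" using cd by simp
    ultimately show ?thesis unfolding T_def by blast
  qed
  have "T = {a<..<b}"
    using connected_clopen[THEN iffD1, OF connected_Ioo, rule_format, OF conjI[OF op cl]] ne by auto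
  then have "y \<in> T" using y by simp
  then show ?thesis unfolding T_def by force
qed


definition cmat :: "complex^'n^'n \<Rightarrow> complex poly^'n^'n" where
  "cmat M = (\<chi> i j. [:M$i$j:] - (if i = j then [:0,1:] else 0))"

definition cpoly :: "complex^'n^'n \<Rightarrow> complex poly" where
  "cpoly M = Determinants.det (cmat M)"

lemma poly_det: "poly (Determinants.det (N::complex poly^'n^'n)) x = Determinants.det (\<chi> i j. poly (N$i$j) x)"
  unfolding Determinants.det_def by (simp add: poly_sum poly_prod poly_of_int)

lemma eig_cpoly: "is_eigenvalue M \<mu> \<longleftrightarrow> poly (cpoly M) \<mu> = 0"
proof -
  have "(\<chi> i j. poly (cmat M $i$j) \<mu>) = M - Finite_Cartesian_Product.mat \<mu>"
    by (simp add: Finite_Cartesian_Product.vec_eq_iff cmat_def Finite_Cartesian_Product.mat_def)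
  then show ?thesis unfolding is_eigenvalue_def cpoly_def poly_det by simp
qed

lemma eigenvalues_cpoly: "eigenvalues M = {x. poly (cpoly M) x = 0}"
  unfolding eigenvalues_def eig_cpoly ..

lemma cmat_deg: "degree (cmat M $ i $ j) \<le> (if i = j then 1 else 0)"
  by (auto simp: cmat_def)

lemma cpoly_deg: "degree (cpoly (M::complex^'n^'n)) = CARD('n) \<and> coeff (cpoly M) CARD('n) = (-1)^CARD('n)"
proof -
  let ?t = "\<lambda>p. of_int (sign p) * (\<Prod>i\<in>UNIV. cmat M $ i $ p i) :: complex poly"
  have cp: "cpoly M = sum ?t {p. p permutes (UNIV::'n set)}"
    unfolding cpoly_def Determinants.det_def ..
  have idt: "?t id = (\<Prod>i\<in>UNIV. pCons (M$i$i) (-1))"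
    by (simp add: cmat_def)
  have nz: "\<forall>i\<in>UNIV. pCons (M$i$i) (-1) \<noteq> 0" by simp
  have d1: "degree (?t id) = CARD('n)"
    unfolding idt by (subst degree_prod_eq_sum_degree[OF nz]) simp
  have c1: "coeff (?t id) CARD('n) = (-1)^CARD('n)"
  proof -
    have "coeff (?t id) CARD('n) = lead_coeff (\<Prod>i\<in>UNIV. pCons (M$i$i) (-1))"
      using d1 idt by simp
    also have "\<dots> = (\<Prod>i\<in>(UNIV::'n set). -1)"
      unfolding lead_coeff_prod by (simp add: lead_coeff_pCons)
    finally show ?thesis by simp
  qed
  have other: "degree (?t p) < CARD('n)" if "p \<in> {p. p permutes (UNIV::'n set)} - {id}" for p
  proof -
    from that have pp: "p permutes UNIV" "p \<noteq> id" by auto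
    then obtain k where k: "p k \<noteq> k" by (metis eq_id_iff)
    have "degree (?t p) \<le> degree (\<Prod>i\<in>UNIV. cmat M $ i $ p i)"
      by (metis degree_mult_le add_0 degree_of_int)
    also have "\<dots> \<le> (\<Sum>i\<in>UNIV. degree (cmat M $ i $ p i))"
      using degree_prod_sum_le[of UNIV "\<lambda>i. cmat M $ i $ p i"] by (simp add: o_def)
    also have "\<dots> \<le> (\<Sum>i\<in>UNIV. if i = k then 0 else 1)"
    proof (rule sum_mono)
      fix i :: 'n
      show "degree (cmat M $ i $ p i) \<le> (if i = k then 0 else 1)"
        using cmat_deg[of M i "p i"] k by (cases "i = k") (auto split: if_splits)
    qed
    also have "\<dots> = CARD('n) - 1"
      by (simp add: sum.If_cases Compl_eq_Diff_UNIV card_Diff_singleton_if)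
    also have "\<dots> < CARD('n)" by simp
    finally show ?thesis .
  qed
  have fin: "finite {p. p permutes (UNIV::'n set)}" by (simp add: finite_permutations)
  have "id \<in> {p. p permutes (UNIV::'n set)}" by (simp add: permutes_id)
  from degree_lcoeff_sum[where f="?t", OF d1 fin this other c1] show ?thesis unfolding cp .
qed

lemma size_sum_count: "size (X::'a multiset) = (\<Sum>x\<in>set_mset X. count X x)"
  by (rule size_multiset_overloaded_eq)

lemma rsq_card: assumes p0: "(p::complex poly) \<noteq> 0"
  shows "rsquarefree p \<longleftrightarrow> card {x. poly p x = 0} = degree p"
proof -
  let ?R = "{x. poly p x = 0}"
  have fin: "finite ?R" using poly_roots_finite[OF p0] .
  have "degree p = (\<Sum>x\<in>set_mset (proots p). count (proots p) x)"
    using size_proots_complex[of p] size_sum_count[of "proots p"] by simp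
  also have "\<dots> = (\<Sum>x\<in>?R. order x p)"
    using p0 by (simp add: set_count_proots)
  finally have dg: "degree p = (\<Sum>x\<in>?R. order x p)" .
  have o1: "\<forall>x\<in>?R. order x p \<ge> 1" using p0 by (auto simp: order_root)
  have eq: "card ?R = degree p \<longleftrightarrow> (\<forall>x\<in>?R. order x p = 1)"
  proof -
    have "degree p = card ?R + (\<Sum>x\<in>?R. order x p - 1)"
    proof -
      have "(\<Sum>x\<in>?R. order x p) = (\<Sum>x\<in>?R. 1 + (order x p - 1))"
        using o1 by (intro sum.cong) auto
      also have "\<dots> = card ?R + (\<Sum>x\<in>?R. order x p - 1)"
        by (simp only: sum.distrib) simp
      finally show ?thesis unfolding dg .
    qed
    then have "card ?R = degree p \<longleftrightarrow> (\<Sum>x\<in>?R. order x p - 1) = 0" by linarith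
    also have "\<dots> \<longleftrightarrow> (\<forall>x\<in>?R. order x p - 1 = 0)" using fin by (simp only: sum_eq_0_iff)
    also have "\<dots> \<longleftrightarrow> (\<forall>x\<in>?R. order x p = 1)" using o1 by (auto intro: le_antisym)
    finally show ?thesis .
  qed
  have r: "\<And>a. poly p a = 0 \<longleftrightarrow> order a p \<noteq> 0" using p0 order_root by blast
  show ?thesis unfolding eq rsquarefree_def using p0 r by (metis (mono_tags) mem_Collect_eq)
qed

lemma distinct_iff_res:
  "distinct_eigenvalues (M::complex^'n^'n) \<longleftrightarrow> resultant (cpoly M) (pderiv (cpoly M)) \<noteq> 0"
proof -
  let ?p = "cpoly M"
  have p0: "?p \<noteq> 0" using cpoly_deg[of M] by auto
  have "distinct_eigenvalues M \<longleftrightarrow> rsquarefree ?p"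
    unfolding distinct_eigenvalues_def eigenvalues_cpoly rsq_card[OF p0] cpoly_deg[of M, THEN conjunct1] ..
  also have "\<dots> \<longleftrightarrow> (\<forall>a. \<not> (poly ?p a = 0 \<and> poly (pderiv ?p) a = 0))"
    by (rule rsquarefree_roots)
  also have "\<dots> \<longleftrightarrow> degree (gcd ?p (pderiv ?p)) = 0"
  proof
    assume H: "\<forall>a. \<not> (poly ?p a = 0 \<and> poly (pderiv ?p) a = 0)"
    show "degree (gcd ?p (pderiv ?p)) = 0"
    proof (rule ccontr)
      assume "degree (gcd ?p (pderiv ?p)) \<noteq> 0"
      then have "\<not> constant (poly (gcd ?p (pderiv ?p)))" by (simp add: constant_degree)
      from fundamental_theorem_of_algebra[OF this] obtain z where z: "poly (gcd ?p (pderiv ?p)) z = 0" by blast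
      have "poly ?p z = 0" using z by (metis gcd_dvd1 poly_eq_0_iff_dvd dvd_trans)
      moreover have "poly (pderiv ?p) z = 0" using z by (metis gcd_dvd2 poly_eq_0_iff_dvd dvd_trans)
      ultimately show False using H by blast
    qed
  next
    assume d: "degree (gcd ?p (pderiv ?p)) = 0"
    show "\<forall>a. \<not> (poly ?p a = 0 \<and> poly (pderiv ?p) a = 0)"
    proof (intro allI notI)
      fix a assume "poly ?p a = 0 \<and> poly (pderiv ?p) a = 0"
      then have "[:-a,1:] dvd gcd ?p (pderiv ?p)" by (simp add: poly_eq_0_iff_dvd)
      moreover have "gcd ?p (pderiv ?p) \<noteq> 0" using p0 by simp
      ultimately have "degree [:-a,1:] \<le> degree (gcd ?p (pderiv ?p))" by (rule dvd_imp_degree_le)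
      then show False using d by simp
    qed
  qed
  also have "\<dots> \<longleftrightarrow> resultant ?p (pderiv ?p) \<noteq> 0"
    using resultant_0_gcd[of ?p "pderiv ?p"] by simp
  finally show ?thesis .
qed


definition holp :: "complex set \<Rightarrow> (complex \<Rightarrow> complex poly) \<Rightarrow> bool" where
  "holp S F \<longleftrightarrow> (\<forall>k. (\<lambda>z. coeff (F z) k) holomorphic_on S)"

lemma holp_const: "holp S (\<lambda>z. c)"
  unfolding holp_def by (simp add: holomorphic_on_const)

lemma holp_lift: assumes "f holomorphic_on S" shows "holp S (\<lambda>z. [:f z:])"
  unfolding holp_def
proof
  fix k show "(\<lambda>z. coeff [:f z:] k) holomorphic_on S"
    using assms by (cases k) (simp_all add: holomorphic_on_const)
qed

lemma holp_diff: "holp S F \<Longrightarrow> holp S G \<Longrightarrow> holp S (\<lambda>z. F z - G z)"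
  unfolding holp_def by (simp add: holomorphic_on_diff)

lemma holp_mult: "holp S F \<Longrightarrow> holp S G \<Longrightarrow> holp S (\<lambda>z. F z * G z)"
  unfolding holp_def coeff_mult
  by (intro allI holomorphic_on_sum holomorphic_on_mult) auto

lemma holp_sum: "finite A \<Longrightarrow> (\<And>a. a \<in> A \<Longrightarrow> holp S (F a)) \<Longrightarrow> holp S (\<lambda>z. \<Sum>a\<in>A. F a z)"
  unfolding holp_def coeff_sum
  by (intro allI holomorphic_on_sum) auto

lemma holp_prod: "finite A \<Longrightarrow> (\<And>a. a \<in> A \<Longrightarrow> holp S (F a)) \<Longrightarrow> holp S (\<lambda>z. \<Prod>a\<in>A. F a z)"
proof (induction A rule: finite_induct)
  case empty
  then show ?case by (simp add: holp_const)
next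
  case (insert x A)
  then show ?case by (simp add: holp_mult)
qed

lemma hol_if: "f holomorphic_on S \<Longrightarrow> g holomorphic_on S \<Longrightarrow> (\<lambda>z. if c then f z else g z) holomorphic_on S"
  by (cases c) auto

lemma hol_cpoly:
  assumes "\<And>i j. (\<lambda>z. G z $ i $ j) holomorphic_on S"
  shows "holp S (\<lambda>z. cpoly (G z :: complex^'n^'n))"
proof -
  have e: "holp S (\<lambda>z. cmat (G z) $ i $ j)" for i j
    unfolding cmat_def by (simp add: holp_diff holp_lift holp_const assms)
  show ?thesis
    unfolding cpoly_def Determinants.det_def
    by (intro holp_sum holp_mult holp_const holp_prod e) (simp_all add: finite_permutations)
qed

lemma hol_D:
  assumes "\<And>i j. (\<lambda>z. G z $ i $ j) holomorphic_on S"
  shows "(\<lambda>z. resultant (cpoly (G z :: complex^'n^'n)) (pderiv (cpoly (G z)))) holomorphic_on S"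
proof -
  define n where "n = CARD('n)"
  define m where "m = n + (n - 1)"
  define E where "E = (\<lambda>i j z. if i < n - 1 then if i \<le> j \<and> j - i \<le> n then coeff (cpoly (G z)) (n + i - j) else 0
       else if i - (n - 1) \<le> j \<and> j \<le> i then coeff (pderiv (cpoly (G z))) (i-j) else 0)"
  have hp: "holp S (\<lambda>z. cpoly (G z))" by (rule hol_cpoly[OF assms])
  have hpd: "holp S (\<lambda>z. pderiv (cpoly (G z)))"
    using hp unfolding holp_def coeff_pderiv by (auto intro: holomorphic_on_mult holomorphic_on_const)
  have hE: "(E i j) holomorphic_on S" for i j
    using hp hpd unfolding E_def holp_def
    by (intro hol_if) (auto simp: holomorphic_on_const)
  have eq: "resultant (cpoly (G z)) (pderiv (cpoly (G z))) =
     (\<Sum>p | p permutes {0..<m}. of_int (sign p) * (\<Prod>i=0..<m. E i (p i) z))" for z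
  proof -
    have d: "degree (cpoly (G z)) = n" using cpoly_deg[of "G z"] n_def by simp
    have d': "degree (pderiv (cpoly (G z))) = n - 1" by (simp add: degree_pderiv d)
    show ?thesis
      unfolding resultant_def sylvester_mat_def d d' Determinant.det_def sylvester_mat_sub_def
      apply (simp add: m_def)
      apply (intro sum.cong refl arg_cong2[where f="(*)"] prod.cong)
      apply (subst index_mat)
        apply simp
      apply (simp add: permutes_in_image)
      apply (simp add: E_def)
      done
  qed
  show ?thesis unfolding eq
    by (intro holomorphic_on_sum holomorphic_on_mult holomorphic_on_const holomorphic_on_prod hE)
qed


definition Dsc :: "complex^'n^'n \<Rightarrow> complex" where
  "Dsc M = resultant (cpoly M) (pderiv (cpoly M))"

lemma matrix_local:
  fixes g :: "'n::finite \<Rightarrow> 'n \<Rightarrow> real \<Rightarrow> complex"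
  assumes an: "\<And>i j. real_analytic_on (g i j) {a i j<..<b i j}"
    and x0: "\<And>i j. x0 \<in> {a i j<..<b i j}"
  shows "\<exists>r>0. \<exists>HG :: complex \<Rightarrow> complex^'n^'n. (\<forall>i j. (\<lambda>z. HG z $ i $ j) holomorphic_on ball (complex_of_real x0) r) \<and>
           (\<forall>x. \<bar>x - x0\<bar> < r \<longrightarrow> HG (of_real x) = (\<chi> i j. g i j x))"
proof -
  have "\<forall>i j. \<exists>r>0. \<exists>H. H holomorphic_on ball (complex_of_real x0) r \<and>
           (\<forall>x. \<bar>x - x0\<bar> < r \<longrightarrow> H (of_real x) = g i j x)"
    using real_analytic_local[OF an x0] by blast
  then obtain R Hf where RH: "\<And>i j. R i j > 0 \<and> Hf i j holomorphic_on ball (complex_of_real x0) (R i j) \<and>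
           (\<forall>x. \<bar>x - x0\<bar> < R i j \<longrightarrow> Hf i j (of_real x) = g i j x)"
    by metis
  define r where "r = Min (range (\<lambda>ij. R (fst ij) (snd ij)))"
  have rle: "r \<le> R i j" for i j
    unfolding r_def by (rule Min_le) (auto intro: range_eqI[of _ _ "(i,j)"])
  have rpos: "r > 0"
    unfolding r_def using RH by (subst Min_gr_iff) auto
  define HG where "HG = (\<lambda>z. \<chi> i j. Hf i j z :: complex^'n^'n)"
  have "(\<lambda>z. HG z $ i $ j) holomorphic_on ball (complex_of_real x0) r" for i j
    unfolding HG_def using RH[of i j] rle[of i j]
    by (auto intro: holomorphic_on_subset[of _ "ball (complex_of_real x0) (R i j)"])
  moreover have "\<forall>x. \<bar>x - x0\<bar> < r \<longrightarrow> HG (of_real x) = (\<chi> i j. g i j x)"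
  proof (intro allI impI)
    fix x assume x: "\<bar>x - x0\<bar> < r"
    have "Hf i j (of_real x) = g i j x" for i j
      using RH[of i j] rle[of i j] x by (meson less_le_trans)
    then show "HG (of_real x) = (\<chi> i j. g i j x)"
      unfolding HG_def by (simp add: Finite_Cartesian_Product.vec_eq_iff)
  qed
  ultimately show ?thesis using rpos by blast
qed

theorem theorem4p4:
  fixes \<Gamma> :: "(complex^'n^'n) set"
  assumes sub: "\<Gamma> \<subseteq> real_spectrum_matrices"
    and paths: "\<And>A B. A \<in> \<Gamma> \<Longrightarrow> B \<in> \<Gamma> \<Longrightarrow>
        \<exists>p :: real \<Rightarrow> complex^'n^'n.
          (\<forall>i j. analytic_on_01 (\<lambda>t. p t $ i $ j)) \<and>
          p 0 = A \<and> p 1 = B \<and> p ` {0..1} \<subseteq> \<Gamma>"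
    and ex: "\<exists>A\<in>\<Gamma>. distinct_eigenvalues A"
  shows "\<Gamma> \<subseteq> closure {A\<in>\<Gamma>. distinct_eigenvalues A}"
proof
  fix B assume B: "B \<in> \<Gamma>"
  obtain A where A: "A \<in> \<Gamma>" "distinct_eigenvalues A" using ex by blast
  obtain p :: "real \<Rightarrow> complex^'n^'n" where pan: "\<forall>i j. analytic_on_01 (\<lambda>t. p t $ i $ j)"
    and p0: "p 0 = B" and p1: "p 1 = A" and pG: "p ` {0..1} \<subseteq> \<Gamma>"
    using paths[OF B A(1)] by blast
  have "\<forall>i j. \<exists>a b g. a < 0 \<and> 1 < b \<and> real_analytic_on g {a<..<b} \<and> (\<forall>t\<in>{0..1}. p t $ i $ j = g t)"
    using pan unfolding analytic_on_01_def by blast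
  then obtain a b g where abg: "\<And>i j. a i j < 0 \<and> 1 < b i j \<and> real_analytic_on (g i j) {a i j<..<b i j} \<and>
      (\<forall>t\<in>{0..1}. p t $ i $ j = g i j t)"
    by metis
  define a0 where "a0 = Max (range (\<lambda>ij. a (fst ij) (snd ij)))"
  define b0 where "b0 = Min (range (\<lambda>ij. b (fst ij) (snd ij)))"
  have a0le: "a i j \<le> a0" for i j
    unfolding a0_def by (rule Max_ge) (auto intro: range_eqI[of _ _ "(i,j)"])
  have b0ge: "b0 \<le> b i j" for i j
    unfolding b0_def by (rule Min_le) (auto intro: range_eqI[of _ _ "(i,j)"])
  have a0neg: "a0 < 0" unfolding a0_def using abg by (subst Max_less_iff) auto
  have b0gt: "1 < b0" unfolding b0_def using abg by (subst Min_gr_iff) auto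
  define gm where "gm = (\<lambda>x. \<chi> i j. g i j x :: complex^'n^'n)"
  have gmp: "gm t = p t" if "t \<in> {0..1}" for t
    unfolding gm_def using abg that by (simp add: Finite_Cartesian_Product.vec_eq_iff)
  have loc: "\<exists>r>0. \<exists>HG :: complex \<Rightarrow> complex^'n^'n. (\<forall>i j. (\<lambda>z. HG z $ i $ j) holomorphic_on ball (complex_of_real x0) r) \<and>
           (\<forall>x. \<bar>x - x0\<bar> < r \<longrightarrow> HG (of_real x) = gm x)" if x0: "x0 \<in> {a0<..<b0}" for x0
    unfolding gm_def
  proof (rule matrix_local)
    show "real_analytic_on (g i j) {a i j<..<b i j}" for i j using abg by blast
    show "x0 \<in> {a i j<..<b i j}" for i j using x0 a0le[of i j] b0ge[of i j] by auto
  qed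
  define h where "h = (\<lambda>x. Dsc (gm x))"
  have hloc: "\<exists>r>0. \<exists>H. H holomorphic_on ball (complex_of_real x0) r \<and>
           (\<forall>x. \<bar>x - x0\<bar> < r \<longrightarrow> H (of_real x) = h x)" if x0: "x0 \<in> {a0<..<b0}" for x0
  proof -
    obtain r HG where r: "r > 0" and hol: "\<forall>i j. (\<lambda>z. HG z $ i $ j) holomorphic_on ball (complex_of_real x0) r"
      and eq: "\<forall>x. \<bar>x - x0\<bar> < r \<longrightarrow> HG (of_real x) = gm x" using loc[OF x0] by blast
    have "(\<lambda>z. Dsc (HG z)) holomorphic_on ball (complex_of_real x0) r"
      unfolding Dsc_def by (rule hol_D) (use hol in blast)
    moreover have "\<forall>x. \<bar>x - x0\<bar> < r \<longrightarrow> Dsc (HG (of_real x)) = h x"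
      using eq by (simp add: h_def)
    ultimately show ?thesis using r by blast
  qed
  have h1: "h 1 \<noteq> 0"
    using A(2) gmp[of 1] p1 unfolding h_def Dsc_def distinct_iff_res by simp
  show "B \<in> closure {A\<in>\<Gamma>. distinct_eigenvalues A}"
    unfolding closure_approachable
  proof (intro allI impI)
    fix e :: real assume e: "e > 0"
    have "0 \<in> {a0<..<b0}" using a0neg b0gt by simp
    from loc[OF this] obtain r HG where r: "r > 0"
      and hol: "\<forall>i j. (\<lambda>z. HG z $ i $ j) holomorphic_on ball (complex_of_real 0) r"
      and eq: "\<forall>x. \<bar>x - 0\<bar> < r \<longrightarrow> HG (of_real x) = gm x" by blast
    have "continuous_on (ball 0 r) (\<lambda>z. \<chi> i j. HG z $ i $ j)"
      using hol by (intro continuous_on_vec_lambda holomorphic_on_imp_continuous_on) auto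
    then have "continuous_on (ball 0 r) HG" by simp
    then have "isCont HG 0" using r by (simp add: continuous_on_eq_continuous_at)
    then obtain d where d: "d > 0" and dd: "\<And>z. dist z 0 < d \<Longrightarrow> dist (HG z) (HG 0) < e"
      using e unfolding continuous_at_eps_delta by blast
    define \<delta> where "\<delta> = min (min d r) 1"
    have \<delta>: "\<delta> > 0" using d r by (simp add: \<delta>_def)
    have "\<exists>t\<in>{0<..<\<delta>}. h t \<noteq> 0"
    proof (rule ccontr)
      assume "\<not> ?thesis"
      then have z: "\<And>t. t \<in> {0<..<\<delta>} \<Longrightarrow> h t = 0" by blast
      have "h 1 = 0"
      proof (rule identity_real[OF hloc \<delta> _ z])
        show "{0<..<\<delta>} \<subseteq> {a0<..<b0}" using a0neg b0gt by (auto simp: \<delta>_def)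
        show "1 \<in> {a0<..<b0}" using a0neg b0gt by simp
      qed auto
      then show False using h1 by simp
    qed
    then obtain t where t: "0 < t" "t < \<delta>" "h t \<noteq> 0" by auto
    have t01: "t \<in> {0..1}" using t by (auto simp: \<delta>_def)
    have "p t \<in> \<Gamma>" using pG t01 by blast
    moreover have "distinct_eigenvalues (p t)"
      using t(3) gmp[OF t01] unfolding h_def Dsc_def distinct_iff_res by simp
    moreover have "dist (p t) B < e"
    proof -
      have "gm t = HG (of_real t)" using eq t by (auto simp: \<delta>_def)
      moreover have "gm 0 = HG 0" using eq r by (metis abs_zero diff_zero of_real_0)
      moreover have "dist (complex_of_real t) 0 < d" using t by (simp add: \<delta>_def)
      ultimately have "dist (gm t) (gm 0) < e" using dd by simp
      then show ?thesis using gmp[OF t01] gmp[of 0] p0 by simp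
    qed
    ultimately show "\<exists>y\<in>{A \<in> \<Gamma>. distinct_eigenvalues A}. dist y B < e" by blast
  qed
qed

end
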